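(* Let $H=\mathrm{diag}(\lambda_1,\dots,\lambda_d)$ with $\lambda_1\ge\dots\ge\lambda_d>0$, and set $L=\lambda_1$ and $\mu=\lambda_d$, in the setting of the context. Assume $\mathbb{E}[n_tn_t^\top]\preceq\sigma^2H$ for all $t$. Run SGD from $w_1$ with inverse time step size $\eta_t=\frac{1}{L+\mu t}$, that is, $w_{t+1}=w_t-\eta_t(H(\xi_t)w_t-b(\xi_t))$ for $t=1,2,\dots$ Then for every $t\ge1$, $$2\mathbb{E}[f(w_{t+1})-f(w_* )]=\mathbb{E}\left[\sum_{j=1}^d\lambda_j(w_{t+1,j}-w_{*,j})^2\right]\le\left(\frac{L+\mu}{L+\mu t}\right)^2\sum_{j=1}^d\lambda_j(w_{1,j}-w_{*,j})^2+\sum_{j=1}^d\left(\frac{\lambda_j^2}{2\lambda_j-\mu}\cdot\frac{\sigma^2}{L+\mu t}+\frac{\lambda_j^2\sigma^2}{(L+\mu t)^2}\right).$$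
   Context: Let $\xi$ be a random data sample, $H(\xi)\in\mathbb{R}^{d\times d}$ a random symmetric matrix and $b(\xi)\in\mathbb{R}^d$ a random vector. Define $f(w,\xi)=\frac12w^\top H(\xi)w-b(\xi)^\top w$ and $f(w)=\mathbb{E}_\xi f(w,\xi)$. Set $H=\mathbb{E}H(\xi)$ and $b=\mathbb{E}b(\xi)$, with $w_*=H^{-1}b$. $\xi_1,\xi_2,\dots$ are i.i.d. copies of $\xi$, the initial point $w_1$ is deterministic, and $n_t=(Hw_t-b)-(H(\xi_t)w_t-b(\xi_t))$. The notation $w_{t,j}$ denotes the $j$-th coordinate of $w_t$. *)

theory Defs
  imports "HOL-Probability.Probability"
begin

text \<open>Vectors in R^d are functions nat => real (only coordinates 1..d matter);
  d x d matrices are functions nat => nat => real (only entries in {1..d}^2 matter).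
  The data samples xi t (t >= 1) are random variables on the probability space M
  with values in the measurable space N; Hs and bs map a sample to H(xi) and b(xi).\<close>

text \<open>SGD iterates: sgd_iter ... k is w_(k+1); the step producing w_(t+1) uses
  sample xi t and step size eta_t = 1/(L + mu t).\<close>
primrec sgd_iter ::
  "(nat \<Rightarrow> 'a \<Rightarrow> 'b) \<Rightarrow> ('b \<Rightarrow> nat \<Rightarrow> nat \<Rightarrow> real) \<Rightarrow> ('b \<Rightarrow> nat \<Rightarrow> real) \<Rightarrow> nat \<Rightarrow>
   real \<Rightarrow> real \<Rightarrow> (nat \<Rightarrow> real) \<Rightarrow> nat \<Rightarrow> 'a \<Rightarrow> nat \<Rightarrow> real" where
  "sgd_iter \<xi> Hs bs d L \<mu> w1 0 \<omega> = w1"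
| "sgd_iter \<xi> Hs bs d L \<mu> w1 (Suc k) \<omega> =
     (let w = sgd_iter \<xi> Hs bs d L \<mu> w1 k \<omega>;
          \<eta> = 1 / (L + \<mu> * real (Suc k))
      in (\<lambda>j. w j - \<eta> * ((\<Sum>i=1..d. Hs (\<xi> (Suc k) \<omega>) j i * w i) - bs (\<xi> (Suc k) \<omega>) j)))"

definition Hmean :: "'a measure \<Rightarrow> (nat \<Rightarrow> 'a \<Rightarrow> 'b) \<Rightarrow> ('b \<Rightarrow> nat \<Rightarrow> nat \<Rightarrow> real) \<Rightarrow> nat \<Rightarrow> nat \<Rightarrow> real" where
  "Hmean M \<xi> Hs = (\<lambda>i k. \<integral>\<omega>. Hs (\<xi> 1 \<omega>) i k \<partial>M)"

definition bmean :: "'a measure \<Rightarrow> (nat \<Rightarrow> 'a \<Rightarrow> 'b) \<Rightarrow> ('b \<Rightarrow> nat \<Rightarrow> real) \<Rightarrow> nat \<Rightarrow> real" where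
  "bmean M \<xi> bs = (\<lambda>i. \<integral>\<omega>. bs (\<xi> 1 \<omega>) i \<partial>M)"

definition fobj :: "'a measure \<Rightarrow> (nat \<Rightarrow> 'a \<Rightarrow> 'b) \<Rightarrow> ('b \<Rightarrow> nat \<Rightarrow> nat \<Rightarrow> real) \<Rightarrow> ('b \<Rightarrow> nat \<Rightarrow> real) \<Rightarrow> nat \<Rightarrow> (nat \<Rightarrow> real) \<Rightarrow> real" where
  "fobj M \<xi> Hs bs d w = (\<integral>\<omega>. (1/2) * (\<Sum>i=1..d. \<Sum>k=1..d. w i * Hs (\<xi> 1 \<omega>) i k * w k)
                                 - (\<Sum>j=1..d. bs (\<xi> 1 \<omega>) j * w j) \<partial>M)"

definition noise ::
  "'a measure \<Rightarrow> (nat \<Rightarrow> 'a \<Rightarrow> 'b) \<Rightarrow> ('b \<Rightarrow> nat \<Rightarrow> nat \<Rightarrow> real) \<Rightarrow> ('b \<Rightarrow> nat \<Rightarrow> real) \<Rightarrow> nat \<Rightarrow>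
   real \<Rightarrow> real \<Rightarrow> (nat \<Rightarrow> real) \<Rightarrow> nat \<Rightarrow> 'a \<Rightarrow> nat \<Rightarrow> real" where
  "noise M \<xi> Hs bs d L \<mu> w1 t \<omega> j =
     (let w = sgd_iter \<xi> Hs bs d L \<mu> w1 (t - 1) \<omega> in
      ((\<Sum>i=1..d. Hmean M \<xi> Hs j i * w i) - bmean M \<xi> bs j)
      - ((\<Sum>i=1..d. Hs (\<xi> t \<omega>) j i * w i) - bs (\<xi> t \<omega>) j))"

end

theory Submission
  imports Defs
begin


lemma key_poly:
  fixes x lm mu K s :: real
  assumes "0 < mu" "mu \<le> lm" "lm + mu \<le> x" "s = K * (2*lm - mu)" "0 \<le> K"
  shows "(x - lm)^2 * (K * (x - mu) + s) \<le> K * x * (x - mu)^2"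
proof -
  define y where "y = x - mu"
  define c where "c = lm - mu"
  have y: "y \<ge> lm" "c \<ge> 0" "y \<ge> c" using assms by (auto simp: y_def c_def)
  have x: "x = y + mu" "lm = mu + c" by (auto simp: y_def c_def)
  have "K * x * (x - mu)^2 - (x - lm)^2 * (K * (x - mu) + s) = K * (c * ((2*mu+3*c)*y - c*mu - 2*c^2))"
    unfolding x assms(4) by (simp add: x power2_eq_square algebra_simps)
  moreover have "(2*mu+3*c)*y - c*mu - 2*c^2 \<ge> 0"
  proof -
  have "(2*mu+3*c)*y \<ge> (2*mu+3*c)*c" using y assms by (intro mult_left_mono) auto
  moreover have "c*mu + 2*c^2 \<le> (2*mu+3*c)*c" using y assms
    by (simp add: power2_eq_square algebra_simps)
  ultimately show ?thesis by linarith
  qed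
  hence "c * ((2*mu+3*c)*y - c*mu - 2*c^2) \<ge> 0" using y by simp
  ultimately show ?thesis using assms by (smt (verit) mult_nonneg_nonneg)
qed

lemma rec_bound:
  fixes a :: "nat \<Rightarrow> real" and L lm mu s :: real
  assumes mu: "0 < mu" "mu \<le> lm" "lm \<le> L" and s: "0 \<le> s" and a0: "0 \<le> a 0"
    and step: "\<And>k. a (Suc k) \<le> (1 - lm/(L + mu*real(Suc k)))^2 * a k + s/(L+mu*real(Suc k))^2"
  shows "a t \<le> (L/(L+mu*real t))^2 * a 0 + s/(2*lm-mu)/(L+mu*real t) + s/(L+mu*real t)^2"
proof (induction t)
  case 0
  have "L > 0" using mu by auto
  then show ?case using s mu by simp
next
  case (Suc k)
  define x where "x = L + mu * real (Suc k)"
  define K where "K = s / (2*lm - mu)"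
  have xk: "L + mu * real k = x - mu" by (simp add: x_def algebra_simps)
  have x: "x \<ge> L + mu" using mu by (simp add: x_def)
  have xpos: "x - mu > 0" "x > 0" "x - lm \<ge> 0" using x mu by auto
  have K: "K \<ge> 0" "s = K * (2*lm - mu)" using s mu by (auto simp: K_def)
  have IH: "a k \<le> (L/(x-mu))^2 * a 0 + K/(x-mu) + s/(x-mu)^2"
    using Suc.IH by (simp add: xk K_def)
  have q: "(1 - lm/x)^2 \<ge> 0" by simp
  have "a (Suc k) \<le> (1 - lm/x)^2 * a k + s/x^2" using step[of k] by (simp add: x_def)
  also have "\<dots> \<le> (1 - lm/x)^2 * ((L/(x-mu))^2 * a 0 + K/(x-mu) + s/(x-mu)^2) + s/x^2"
    using IH q by (intro add_right_mono mult_left_mono) auto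
  also have "\<dots> = ((1 - lm/x) * (L/(x-mu)))^2 * a 0 + ((x-lm)^2 * (K*(x-mu) + s)) / (x^2 * (x-mu)^2) + s/x^2"
  proof -
    have e: "1 - lm/x = (x-lm)/x" using xpos by (simp add: field_simps)
    have "(1 - lm/x)^2 * (K/(x-mu) + s/(x-mu)^2) = ((x-lm)^2 * (K*(x-mu) + s)) / (x^2 * (x-mu)^2)"
    proof -
      have "K/(x-mu) + s/(x-mu)^2 = (K*(x-mu) + s)/(x-mu)^2" using xpos
        by (simp add: add_divide_distrib power2_eq_square)
      thus ?thesis unfolding e power_divide by simp
    qed
    moreover have g: "\<And>c P a Q R::real. c^2 * (P^2 * a + Q + R) = (c*P)^2 * a + c^2 * (Q + R)"
      by (simp add: power_mult_distrib algebra_simps)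
    ultimately show ?thesis by (simp only: g)
  qed
  also have "\<dots> \<le> (L/x)^2 * a 0 + K/x + s/x^2"
  proof -
    have "(1 - lm/x) * (L/(x-mu)) = ((x - lm)/(x-mu)) * (L/x)" using xpos by (simp add: field_simps)
    also have "\<dots> \<le> 1 * (L/x)" using xpos mu by (intro mult_right_mono) auto
    finally have h1: "(1 - lm/x) * (L/(x-mu)) \<le> L/x" by simp
    have h0: "0 \<le> (1 - lm/x) * (L/(x-mu))" using xpos mu by (simp add: field_simps)
    have "((1 - lm/x) * (L/(x-mu)))^2 \<le> (L/x)^2" using h0 h1 by (intro power_mono) auto
    hence A: "((1 - lm/x) * (L/(x-mu)))^2 * a 0 \<le> (L/x)^2 * a 0" using a0 by (intro mult_right_mono) auto
    have "((x-lm)^2 * (K*(x-mu) + s)) \<le> K * x * (x-mu)^2"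
      using key_poly[of mu lm x s K] mu x K by auto
    hence "((x-lm)^2 * (K*(x-mu) + s)) / (x^2 * (x-mu)^2) \<le> K * x * (x-mu)^2 / (x^2 * (x-mu)^2)"
      using xpos by (intro divide_right_mono) auto
    also have "\<dots> = K/x" using xpos by (simp add: power2_eq_square)
    finally show ?thesis using A by linarith
  qed
  finally show ?case by (simp add: x_def K_def)
qed



lemma abs_mult_le_sq: "\<bar>a * b\<bar> \<le> a^2 + (b::real)^2"
proof -
  have "0 \<le> (\<bar>a\<bar> - \<bar>b\<bar>)^2" by simp
  hence "2 * \<bar>a\<bar> * \<bar>b\<bar> \<le> a^2 + b^2" by (simp add: power2_eq_square algebra_simps)
  moreover have "0 \<le> \<bar>a\<bar> * \<bar>b\<bar>" by simp
  ultimately show ?thesis unfolding abs_mult by linarith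
qed

lemma integrable_mult_sq:
  fixes f g :: "'a \<Rightarrow> real"
  assumes "integrable M (\<lambda>x. (f x)^2)" "integrable M (\<lambda>x. (g x)^2)"
    "f \<in> borel_measurable M" "g \<in> borel_measurable M"
  shows "integrable M (\<lambda>x. f x * g x)"
  by (rule Bochner_Integration.integrable_bound[of _ "\<lambda>x. (f x)^2 + (g x)^2"])
     (use assms abs_mult_le_sq in auto)

lemma sgd_cong:
  "(\<And>i. 1 \<le> i \<Longrightarrow> i \<le> k \<Longrightarrow> \<xi> i \<omega> = \<xi>' i \<omega>') \<Longrightarrow>
   sgd_iter \<xi> Hs bs d L mu w1 k \<omega> = sgd_iter \<xi>' Hs bs d L mu w1 k \<omega>'"
  by (induction k) (auto simp: Let_def)

lemma sgd_meas_Pi: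
  assumes Hs_meas: "\<forall>i k. (\<lambda>x. Hs x i k) \<in> borel_measurable N"
    and bs_meas: "\<forall>i. (\<lambda>x. bs x i) \<in> borel_measurable N"
  shows "k \<le> n \<Longrightarrow> (\<lambda>f. sgd_iter (\<lambda>i _. f i) Hs bs d L mu w1 k () j) \<in> borel_measurable (PiM {1..n} (\<lambda>_. N))"
proof (induction k arbitrary: j)
  case 0
  then show ?case by simp
next
  case (Suc k)
  have c: "(\<lambda>f. f (Suc k)) \<in> measurable (PiM {1..n} (\<lambda>_. N)) N"
    using Suc.prems by (intro measurable_component_singleton) auto
  have h: "(\<lambda>f. Hs (f (Suc k)) a b) \<in> borel_measurable (PiM {1..n} (\<lambda>_. N))" for a b
    using measurable_compose[OF c] Hs_meas by auto
  have b: "(\<lambda>f. bs (f (Suc k)) a) \<in> borel_measurable (PiM {1..n} (\<lambda>_. N))" for a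
    using measurable_compose[OF c] bs_meas by auto
  have IH: "(\<lambda>f. sgd_iter (\<lambda>i _. f i) Hs bs d L mu w1 k () a) \<in> borel_measurable (PiM {1..n} (\<lambda>_. N))" for a
    using Suc by auto
  show ?case unfolding sgd_iter.simps Let_def by (intro borel_measurable_diff borel_measurable_times
       borel_measurable_sum h b IH borel_measurable_const)
qed

lemma sgd_meas:
  assumes Hs_meas: "\<forall>i k. (\<lambda>x. Hs x i k) \<in> borel_measurable N"
    and bs_meas: "\<forall>i. (\<lambda>x. bs x i) \<in> borel_measurable N"
    and rv: "\<forall>t\<ge>1. \<xi> t \<in> measurable M N"
  shows "(\<lambda>\<omega>. sgd_iter \<xi> Hs bs d L mu w1 k \<omega> j) \<in> borel_measurable M"
proof (induction k arbitrary: j)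
  case 0
  then show ?case by simp
next
  case (Suc k)
  have c: "\<xi> (Suc k) \<in> measurable M N" using rv by auto
  have h: "(\<lambda>\<omega>. Hs (\<xi> (Suc k) \<omega>) a b) \<in> borel_measurable M" for a b
    using measurable_compose[OF c] Hs_meas by auto
  have b: "(\<lambda>\<omega>. bs (\<xi> (Suc k) \<omega>) a) \<in> borel_measurable M" for a
    using measurable_compose[OF c] bs_meas by auto
  show ?case unfolding sgd_iter.simps Let_def by (intro borel_measurable_diff borel_measurable_times
       borel_measurable_sum h b Suc borel_measurable_const)
qed

lemma indep_split:
  fixes Y1 :: "(nat \<Rightarrow> 'b) \<Rightarrow> real" and Y2 :: "'b \<Rightarrow> real"
  assumes M: "prob_space M" and indep: "prob_space.indep_vars M (\<lambda>_. N) \<xi> {1..}"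
    and Y1: "Y1 \<in> borel_measurable (PiM {1..k} (\<lambda>_. N))" and Y2: "Y2 \<in> borel_measurable N"
    and i1: "integrable M (\<lambda>\<omega>. Y1 (restrict (\<lambda>i. \<xi> i \<omega>) {1..k}))"
    and i2: "integrable M (\<lambda>\<omega>. Y2 (\<xi> (Suc k) \<omega>))"
  shows "integrable M (\<lambda>\<omega>. Y1 (restrict (\<lambda>i. \<xi> i \<omega>) {1..k}) * Y2 (\<xi> (Suc k) \<omega>))"
    and "(\<integral>\<omega>. Y1 (restrict (\<lambda>i. \<xi> i \<omega>) {1..k}) * Y2 (\<xi> (Suc k) \<omega>) \<partial>M)
         = (\<integral>\<omega>. Y1 (restrict (\<lambda>i. \<xi> i \<omega>) {1..k}) \<partial>M) * (\<integral>\<omega>. Y2 (\<xi> (Suc k) \<omega>) \<partial>M)"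
proof -
  interpret prob_space M by (rule M)
  have "indep_var (PiM {1..k} (\<lambda>_. N)) (\<lambda>\<omega>. restrict (\<lambda>i. \<xi> i \<omega>) {1..k})
          (PiM {Suc k} (\<lambda>_. N)) (\<lambda>\<omega>. restrict (\<lambda>i. \<xi> i \<omega>) {Suc k})"
    by (rule indep_var_restrict[OF indep]) auto
  hence "indep_var borel (Y1 \<circ> (\<lambda>\<omega>. restrict (\<lambda>i. \<xi> i \<omega>) {1..k}))
           borel ((\<lambda>g. Y2 (g (Suc k))) \<circ> (\<lambda>\<omega>. restrict (\<lambda>i. \<xi> i \<omega>) {Suc k}))"
    by (rule indep_var_compose[OF _ Y1]) (auto intro!: measurable_compose[OF _ Y2] measurable_component_singleton)
  hence iv: "indep_var borel (\<lambda>\<omega>. Y1 (restrict (\<lambda>i. \<xi> i \<omega>) {1..k})) borel (\<lambda>\<omega>. Y2 (\<xi> (Suc k) \<omega>))"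
    by (simp add: comp_def)
  show "integrable M (\<lambda>\<omega>. Y1 (restrict (\<lambda>i. \<xi> i \<omega>) {1..k}) * Y2 (\<xi> (Suc k) \<omega>))"
    by (rule indep_var_integrable[OF iv i1 i2])
  show "(\<integral>\<omega>. Y1 (restrict (\<lambda>i. \<xi> i \<omega>) {1..k}) * Y2 (\<xi> (Suc k) \<omega>) \<partial>M)
         = (\<integral>\<omega>. Y1 (restrict (\<lambda>i. \<xi> i \<omega>) {1..k}) \<partial>M) * (\<integral>\<omega>. Y2 (\<xi> (Suc k) \<omega>) \<partial>M)"
    by (rule indep_var_lebesgue_integral[OF iv i1 i2])
qed

lemma ident_int:
  fixes g :: "'b \<Rightarrow> real" and \<xi> :: "nat \<Rightarrow> 'a \<Rightarrow> 'b"
  assumes rv: "\<forall>t\<ge>1. \<xi> t \<in> measurable M N"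
    and ident: "\<forall>t\<ge>1. distr M N (\<xi> t) = distr M N (\<xi> 1)"
    and g: "g \<in> borel_measurable N" and t: "t \<ge> 1"
  shows "integral\<^sup>L M (\<lambda>\<omega>. g (\<xi> t \<omega>)) = integral\<^sup>L M (\<lambda>\<omega>. g (\<xi> 1 \<omega>))"
    and "integrable M (\<lambda>\<omega>. g (\<xi> t \<omega>)) = integrable M (\<lambda>\<omega>. g (\<xi> 1 \<omega>))"
proof -
  have r: "\<xi> t \<in> measurable M N" "\<xi> 1 \<in> measurable M N" using rv t by auto
  show "integral\<^sup>L M (\<lambda>\<omega>. g (\<xi> t \<omega>)) = integral\<^sup>L M (\<lambda>\<omega>. g (\<xi> 1 \<omega>))"
    using integral_distr[OF r(1) g] integral_distr[OF r(2) g] ident t by metis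
  show "integrable M (\<lambda>\<omega>. g (\<xi> t \<omega>)) = integrable M (\<lambda>\<omega>. g (\<xi> 1 \<omega>))"
    using integrable_distr_eq[OF r(1) g] integrable_distr_eq[OF r(2) g] ident t by metis
qed

lemma fobj_eq:
  assumes Hs_int: "\<forall>i\<in>{1..d}. \<forall>k\<in>{1..d}. integrable M (\<lambda>\<omega>. Hs (\<xi> 1 \<omega>) i k)"
    and bs_int: "\<forall>i\<in>{1..d}. integrable M (\<lambda>\<omega>. bs (\<xi> 1 \<omega>) i)"
  shows "fobj M \<xi> Hs bs d w = (1/2) * (\<Sum>i=1..d. \<Sum>k=1..d. w i * Hmean M \<xi> Hs i k * w k)
          - (\<Sum>j=1..d. bmean M \<xi> bs j * w j)"
proof -
  have i1: "integrable M (\<lambda>\<omega>. (1/2) * (\<Sum>i=1..d. \<Sum>k=1..d. w i * Hs (\<xi> 1 \<omega>) i k * w k))"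
  proof (rule integrable_mult_right)
    show "integrable M (\<lambda>\<omega>. (\<Sum>i=1..d. \<Sum>k=1..d. w i * Hs (\<xi> 1 \<omega>) i k * w k))"
      apply (rule Bochner_Integration.integrable_sum)+ using Hs_int by auto
  qed
  have i2: "integrable M (\<lambda>\<omega>. (\<Sum>j=1..d. bs (\<xi> 1 \<omega>) j * w j))"
    using bs_int by (auto intro!: Bochner_Integration.integrable_sum)
  have hi: "integrable M (\<lambda>\<omega>. w i * Hs (\<xi> 1 \<omega>) i k * w k)" if "i \<in> {1..d}" "k \<in> {1..d}" for i k
    using Hs_int that by auto
  have bi: "integrable M (\<lambda>\<omega>. bs (\<xi> 1 \<omega>) j * w j)" if "j \<in> {1..d}" for j
    using bs_int that by auto
  have a: "(\<integral>\<omega>. (\<Sum>i=1..d. \<Sum>k=1..d. w i * Hs (\<xi> 1 \<omega>) i k * w k) \<partial>M)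
     = (\<Sum>i=1..d. (\<integral>\<omega>. (\<Sum>k=1..d. w i * Hs (\<xi> 1 \<omega>) i k * w k) \<partial>M))"
    by (rule Bochner_Integration.integral_sum) (rule Bochner_Integration.integrable_sum, rule hi, auto)
  also have "\<dots> = (\<Sum>i=1..d. \<Sum>k=1..d. (\<integral>\<omega>. w i * Hs (\<xi> 1 \<omega>) i k * w k \<partial>M))"
    by (intro sum.cong refl Bochner_Integration.integral_sum hi) auto
  also have "\<dots> = (\<Sum>i=1..d. \<Sum>k=1..d. w i * (\<integral>\<omega>. Hs (\<xi> 1 \<omega>) i k \<partial>M) * w k)"
    by simp
  finally have a': "(\<integral>\<omega>. (\<Sum>i=1..d. \<Sum>k=1..d. w i * Hs (\<xi> 1 \<omega>) i k * w k) \<partial>M)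
     = (\<Sum>i=1..d. \<Sum>k=1..d. w i * (\<integral>\<omega>. Hs (\<xi> 1 \<omega>) i k \<partial>M) * w k)" .
  have b: "(\<integral>\<omega>. (\<Sum>j=1..d. bs (\<xi> 1 \<omega>) j * w j) \<partial>M) = (\<Sum>j=1..d. (\<integral>\<omega>. bs (\<xi> 1 \<omega>) j \<partial>M) * w j)"
  proof -
    have "(\<integral>\<omega>. (\<Sum>j=1..d. bs (\<xi> 1 \<omega>) j * w j) \<partial>M) = (\<Sum>j=1..d. (\<integral>\<omega>. bs (\<xi> 1 \<omega>) j * w j \<partial>M))"
      by (rule Bochner_Integration.integral_sum, rule bi, assumption)
    thus ?thesis by simp
  qed
  show ?thesis
    unfolding fobj_def Hmean_def bmean_def Bochner_Integration.integral_diff[OF i1 i2]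
      integral_mult_right_zero a' b ..
qed


lemma dsum: "finite S \<Longrightarrow> j \<in> S \<Longrightarrow> (\<Sum>i\<in>S. \<Sum>l\<in>S. (if i = j then 1 else 0) * (if l = j then 1 else (0::real)) * F i l) = F j j"
proof -
  assume S: "finite S" "j \<in> S"
  have "(\<Sum>l\<in>S. (if i = j then 1 else 0) * (if l = j then 1 else (0::real)) * F i l) = (if i = j then F i j else 0)" for i
  proof -
    have "(\<Sum>l\<in>S. (if i = j then 1 else 0) * (if l = j then 1 else (0::real)) * F i l) = (\<Sum>l\<in>S. if l = j then (if i = j then F i l else 0) else 0)"
      by (intro sum.cong refl) auto
    thus ?thesis using S by simp
  qed
  thus ?thesis using S by simp
qed
lemma dsum2: "finite S \<Longrightarrow> j \<in> S \<Longrightarrow> (\<Sum>i\<in>S. \<Sum>l\<in>S. (if i = j then 1 else 0) * F i l * (if l = j then 1 else (0::real))) = F j j"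
  using dsum[of S j F] by (simp add: mult_ac)

theorem proposition2:
  fixes M :: "'a measure" and N :: "'b measure"
    and \<xi> :: "nat \<Rightarrow> 'a \<Rightarrow> 'b"
    and Hs :: "'b \<Rightarrow> nat \<Rightarrow> nat \<Rightarrow> real" and bs :: "'b \<Rightarrow> nat \<Rightarrow> real"
    and d :: nat and lam :: "nat \<Rightarrow> real" and \<sigma> :: real
    and w1 wstar :: "nat \<Rightarrow> real"
  assumes M: "prob_space M"
    and d: "d \<ge> 1"
    and lam_pos: "\<forall>j\<in>{1..d}. lam j > 0"
    and lam_dec: "\<forall>i j. 1 \<le> i \<and> i \<le> j \<and> j \<le> d \<longrightarrow> lam j \<le> lam i"
    and rv: "\<forall>t\<ge>1. \<xi> t \<in> measurable M N"
    and indep: "prob_space.indep_vars M (\<lambda>_. N) \<xi> {1..}"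
    and ident: "\<forall>t\<ge>1. distr M N (\<xi> t) = distr M N (\<xi> 1)"
    and Hs_meas: "\<forall>i k. (\<lambda>x. Hs x i k) \<in> borel_measurable N"
    and bs_meas: "\<forall>i. (\<lambda>x. bs x i) \<in> borel_measurable N"
    and Hs_sym: "\<forall>x i k. Hs x i k = Hs x k i"
    and Hs_int: "\<forall>i\<in>{1..d}. \<forall>k\<in>{1..d}. integrable M (\<lambda>\<omega>. Hs (\<xi> 1 \<omega>) i k)"
    and bs_int: "\<forall>i\<in>{1..d}. integrable M (\<lambda>\<omega>. bs (\<xi> 1 \<omega>) i)"
    and H_diag: "\<forall>i\<in>{1..d}. \<forall>k\<in>{1..d}. Hmean M \<xi> Hs i k = (if i = k then lam i else 0)"
    and wstar: "\<forall>j\<in>{1..d}. (\<Sum>k=1..d. Hmean M \<xi> Hs j k * wstar k) = bmean M \<xi> bs j"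
    and noise_int: "\<forall>t\<ge>1. \<forall>i\<in>{1..d}. \<forall>k\<in>{1..d}.
        integrable M (\<lambda>\<omega>. noise M \<xi> Hs bs d (lam 1) (lam d) w1 t \<omega> i
                          * noise M \<xi> Hs bs d (lam 1) (lam d) w1 t \<omega> k)"
    and noise_bound: "\<forall>t\<ge>1. \<forall>v :: nat \<Rightarrow> real.
        (\<Sum>i=1..d. \<Sum>k=1..d. v i * v k *
           (\<integral>\<omega>. noise M \<xi> Hs bs d (lam 1) (lam d) w1 t \<omega> i
                 * noise M \<xi> Hs bs d (lam 1) (lam d) w1 t \<omega> k \<partial>M))
        \<le> \<sigma>\<^sup>2 * (\<Sum>i=1..d. \<Sum>k=1..d. v i * Hmean M \<xi> Hs i k * v k)"
    and t: "t \<ge> 1"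
  shows "2 * (\<integral>\<omega>. fobj M \<xi> Hs bs d (sgd_iter \<xi> Hs bs d (lam 1) (lam d) w1 t \<omega>)
                   - fobj M \<xi> Hs bs d wstar \<partial>M)
           = (\<integral>\<omega>. (\<Sum>j=1..d. lam j * (sgd_iter \<xi> Hs bs d (lam 1) (lam d) w1 t \<omega> j - wstar j)\<^sup>2) \<partial>M)
       \<and> (\<integral>\<omega>. (\<Sum>j=1..d. lam j * (sgd_iter \<xi> Hs bs d (lam 1) (lam d) w1 t \<omega> j - wstar j)\<^sup>2) \<partial>M)
           \<le> ((lam 1 + lam d) / (lam 1 + lam d * real t))\<^sup>2 * (\<Sum>j=1..d. lam j * (w1 j - wstar j)\<^sup>2)
             + (\<Sum>j=1..d. (lam j)\<^sup>2 / (2 * lam j - lam d) * (\<sigma>\<^sup>2 / (lam 1 + lam d * real t))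
                          + (lam j)\<^sup>2 * \<sigma>\<^sup>2 / (lam 1 + lam d * real t)\<^sup>2)"
  proof -
  interpret P: prob_space M by (rule M)
  define W where "W = (\<lambda>k \<omega>. sgd_iter \<xi> Hs bs d (lam 1) (lam d) w1 k \<omega>)"
  define nz where "nz = (\<lambda>k \<omega>. noise M \<xi> Hs bs d (lam 1) (lam d) w1 k \<omega>)"
  define e where "e = (\<lambda>k j \<omega>. W k \<omega> j - wstar j)"
  define x where "x = (\<lambda>k::nat. lam 1 + lam d * real k)"
  define G where "G = (\<lambda>k f. sgd_iter (\<lambda>i _. f i) Hs bs d (lam 1) (lam d) w1 k ())"
  have lamb: "lam d \<le> lam j \<and> lam j \<le> lam 1 \<and> 0 < lam j" if "j \<in> {1..d}" for j
    using lam_dec lam_pos that by auto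
  have mupos: "lam d > 0" using lam_pos d by auto
  have L1: "lam 1 \<ge> lam d" using lamb[of d] d by auto
  have xpos: "x k > 0" for k using mupos L1 unfolding x_def
    by (smt (verit) mult_nonneg_nonneg of_nat_0_le_iff)
  have Hm: "Hmean M \<xi> Hs j i = (if j = i then lam j else 0)" if "j\<in>{1..d}" "i\<in>{1..d}" for i j
    using H_diag that by auto
  have Hsum: "(\<Sum>i=1..d. Hmean M \<xi> Hs j i * v i) = lam j * v j" if "j \<in> {1..d}" for j v
  proof -
    have "(\<Sum>i=1..d. Hmean M \<xi> Hs j i * v i) = (\<Sum>i=1..d. if i = j then lam j * v j else 0)"
      by (intro sum.cong refl) (use that in \<open>auto simp: Hm\<close>)
    also have "\<dots> = lam j * v j" using that by simp
    finally show ?thesis .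
  qed
  have bm: "bmean M \<xi> bs j = lam j * wstar j" if "j \<in> {1..d}" for j
    using wstar Hsum[OF that, of wstar] that by auto

  have Wm: "(\<lambda>\<omega>. W k \<omega> j) \<in> borel_measurable M" for k j
    unfolding W_def by (rule sgd_meas[OF Hs_meas bs_meas rv])
  have em: "(\<lambda>\<omega>. e k j \<omega>) \<in> borel_measurable M" for k j
    unfolding e_def using Wm by (intro borel_measurable_diff) auto
  have Gm: "(\<lambda>f. G k f j) \<in> borel_measurable (PiM {1..k} (\<lambda>_. N))" for k j
    unfolding G_def by (rule sgd_meas_Pi[OF Hs_meas bs_meas]) simp
  have Wrep: "W k \<omega> = G k (restrict (\<lambda>i. \<xi> i \<omega>) {1..k})" for k \<omega>
    unfolding W_def G_def by (rule sgd_cong) auto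

  have nz_eq: "nz (Suc k) \<omega> j = (\<Sum>i=1..d. (Hmean M \<xi> Hs j i - Hs (\<xi> (Suc k) \<omega>) j i) * W k \<omega> i)
        - (bmean M \<xi> bs j - bs (\<xi> (Suc k) \<omega>) j)" for k \<omega> j
    unfolding nz_def noise_def W_def by (simp add: Let_def sum_subtractf left_diff_distrib)
  have hsm: "(\<lambda>\<omega>. Hs (\<xi> (Suc k) \<omega>) a b) \<in> borel_measurable M" for k a b
    using measurable_compose[OF rv[rule_format, of "Suc k"]] Hs_meas by auto
  have bsm: "(\<lambda>\<omega>. bs (\<xi> (Suc k) \<omega>) a) \<in> borel_measurable M" for k a
    using measurable_compose[OF rv[rule_format, of "Suc k"]] bs_meas by auto
  have nzm: "(\<lambda>\<omega>. nz (Suc k) \<omega> j) \<in> borel_measurable M" for k j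
    unfolding nz_eq by (intro borel_measurable_diff borel_measurable_times borel_measurable_sum
        hsm bsm Wm borel_measurable_const)

  have e_step: "e (Suc k) j \<omega> = (1 - lam j / x (Suc k)) * e k j \<omega> + (1 / x (Suc k)) * nz (Suc k) \<omega> j"
    if "j \<in> {1..d}" for k j \<omega>
  proof -
    have n: "nz (Suc k) \<omega> j = lam j * (W k \<omega> j - wstar j)
        - ((\<Sum>i=1..d. Hs (\<xi> (Suc k) \<omega>) j i * W k \<omega> i) - bs (\<xi> (Suc k) \<omega>) j)"
      unfolding nz_def noise_def W_def using Hsum[OF that] bm[OF that] by (simp add: Let_def algebra_simps)
    have "W (Suc k) \<omega> j = W k \<omega> j - (1/x (Suc k)) * ((\<Sum>i=1..d. Hs (\<xi> (Suc k) \<omega>) j i * W k \<omega> i) - bs (\<xi> (Suc k) \<omega>) j)"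
      unfolding W_def x_def by (simp add: Let_def)
    then show ?thesis unfolding e_def using n xpos[of "Suc k"] by (simp add: field_simps)
  qed

  have sq_expand: "(a*X + b*Y)^2 = a^2 * X^2 + (2*a*b) * (X*Y) + b^2 * Y^2" for a b X Y :: real
    by (simp add: power2_eq_square algebra_simps)

  have nzsq: "integrable M (\<lambda>\<omega>. (nz (Suc k) \<omega> j)^2)" if "j \<in> {1..d}" for k j
    using noise_int[rule_format, of "Suc k" j j] that by (simp add: nz_def power2_eq_square)
  have one: "integrable M (\<lambda>\<omega>. (1::real)^2)" by simp
  have esq': "\<forall>j\<in>{1..d}. integrable M (\<lambda>\<omega>. (e k j \<omega>)^2)" for k
  proof (induction k)
    case 0
    show ?case by (simp add: e_def W_def)
  next
    case (Suc k)
    show ?case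
    proof
      fix j assume j: "j \<in> {1..d}"
      have ie: "integrable M (\<lambda>\<omega>. (e k j \<omega>)^2)" using Suc j by auto
      have ic: "integrable M (\<lambda>\<omega>. e k j \<omega> * nz (Suc k) \<omega> j)"
        by (rule integrable_mult_sq[OF ie nzsq[OF j] em nzm])
      show "integrable M (\<lambda>\<omega>. (e (Suc k) j \<omega>)^2)"
        unfolding e_step[OF j] sq_expand using ie ic nzsq[OF j] by auto
    qed
  qed
  have esq: "integrable M (\<lambda>\<omega>. (e k j \<omega>)^2)" if "j \<in> {1..d}" for k j
    using esq' that by auto
  have eint: "integrable M (\<lambda>\<omega>. e k j \<omega>)" if "j \<in> {1..d}" for k j
    using integrable_mult_sq[OF esq[OF that] one em borel_measurable_const] by simp

  have cross: "(\<integral>\<omega>. e k j \<omega> * nz (Suc k) \<omega> j \<partial>M) = 0" if j: "j \<in> {1..d}" for k j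
  proof -
    have t1: "integrable M (\<lambda>\<omega>. (e k j \<omega> * W k \<omega> i) * (Hmean M \<xi> Hs j i - Hs (\<xi> (Suc k) \<omega>) j i))
       \<and> (\<integral>\<omega>. (e k j \<omega> * W k \<omega> i) * (Hmean M \<xi> Hs j i - Hs (\<xi> (Suc k) \<omega>) j i) \<partial>M) = 0"
      if i: "i \<in> {1..d}" for i
    proof -
      let ?Y1 = "\<lambda>f. (G k f j - wstar j) * G k f i"
      let ?Y2 = "\<lambda>y. Hmean M \<xi> Hs j i - Hs y j i"
      have Y1m: "?Y1 \<in> borel_measurable (PiM {1..k} (\<lambda>_. N))"
        by (intro borel_measurable_times borel_measurable_diff Gm borel_measurable_const)
      have Y2m: "?Y2 \<in> borel_measurable N" by (intro borel_measurable_diff borel_measurable_const) (use Hs_meas in auto)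
      have r1: "(\<lambda>\<omega>. ?Y1 (restrict (\<lambda>i. \<xi> i \<omega>) {1..k})) = (\<lambda>\<omega>. e k j \<omega> * W k \<omega> i)"
        by (simp only: e_def Wrep)
      have i1: "integrable M (\<lambda>\<omega>. e k j \<omega> * W k \<omega> i)"
      proof -
        have "(\<lambda>\<omega>. e k j \<omega> * W k \<omega> i) = (\<lambda>\<omega>. e k j \<omega> * e k i \<omega> + wstar i * e k j \<omega>)"
          by (auto simp: e_def algebra_simps)
        thus ?thesis using integrable_mult_sq[OF esq[OF j] esq[OF i] em em] eint[OF j] by simp
      qed
      have hi: "integrable M (\<lambda>\<omega>. Hs (\<xi> (Suc k) \<omega>) j i)"
        using ident_int(2)[OF rv ident, of "\<lambda>y. Hs y j i" "Suc k"] Hs_meas Hs_int i j by auto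
      have i2: "integrable M (\<lambda>\<omega>. Hmean M \<xi> Hs j i - Hs (\<xi> (Suc k) \<omega>) j i)"
        using hi by auto
      have e2: "(\<integral>\<omega>. Hmean M \<xi> Hs j i - Hs (\<xi> (Suc k) \<omega>) j i \<partial>M) = 0"
      proof -
        have "(\<integral>\<omega>. Hs (\<xi> (Suc k) \<omega>) j i \<partial>M) = Hmean M \<xi> Hs j i"
          using ident_int(1)[OF rv ident, of "\<lambda>y. Hs y j i" "Suc k"] Hs_meas unfolding Hmean_def by auto
        thus ?thesis using hi by (simp add: Bochner_Integration.integral_diff P.prob_space)
      qed
      show ?thesis using indep_split[OF M indep Y1m Y2m, unfolded r1, OF i1 i2] e2 by (simp add: e_def Wrep)
    qed
    have t2: "integrable M (\<lambda>\<omega>. e k j \<omega> * (bmean M \<xi> bs j - bs (\<xi> (Suc k) \<omega>) j))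
       \<and> (\<integral>\<omega>. e k j \<omega> * (bmean M \<xi> bs j - bs (\<xi> (Suc k) \<omega>) j) \<partial>M) = 0"
    proof -
      let ?Y1 = "\<lambda>f. (G k f j - wstar j)"
      let ?Y2 = "\<lambda>y. bmean M \<xi> bs j - bs y j"
      have Y1m: "?Y1 \<in> borel_measurable (PiM {1..k} (\<lambda>_. N))"
        by (intro borel_measurable_diff Gm borel_measurable_const)
      have Y2m: "?Y2 \<in> borel_measurable N" by (intro borel_measurable_diff borel_measurable_const) (use bs_meas in auto)
      have r1: "(\<lambda>\<omega>. ?Y1 (restrict (\<lambda>i. \<xi> i \<omega>) {1..k})) = (\<lambda>\<omega>. e k j \<omega>)"
        by (simp only: e_def Wrep)
      have hi: "integrable M (\<lambda>\<omega>. bs (\<xi> (Suc k) \<omega>) j)"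
        using ident_int(2)[OF rv ident, of "\<lambda>y. bs y j" "Suc k"] bs_meas bs_int j by auto
      have i2: "integrable M (\<lambda>\<omega>. bmean M \<xi> bs j - bs (\<xi> (Suc k) \<omega>) j)"
        using hi by auto
      have e2: "(\<integral>\<omega>. bmean M \<xi> bs j - bs (\<xi> (Suc k) \<omega>) j \<partial>M) = 0"
      proof -
        have "(\<integral>\<omega>. bs (\<xi> (Suc k) \<omega>) j \<partial>M) = bmean M \<xi> bs j"
          using ident_int(1)[OF rv ident, of "\<lambda>y. bs y j" "Suc k"] bs_meas unfolding bmean_def by auto
        thus ?thesis using hi by (simp add: Bochner_Integration.integral_diff P.prob_space)
      qed
      show ?thesis using indep_split[OF M indep Y1m Y2m, unfolded r1, OF eint[OF j] i2] e2 by (simp add: e_def Wrep)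
    qed
    have eq: "(\<lambda>\<omega>. e k j \<omega> * nz (Suc k) \<omega> j) = (\<lambda>\<omega>. (\<Sum>i=1..d. (e k j \<omega> * W k \<omega> i) * (Hmean M \<xi> Hs j i - Hs (\<xi> (Suc k) \<omega>) j i))
         - e k j \<omega> * (bmean M \<xi> bs j - bs (\<xi> (Suc k) \<omega>) j))"
      by (rule ext) (simp add: nz_eq right_diff_distrib left_diff_distrib sum_distrib_left mult_ac)
    have s1: "integrable M (\<lambda>\<omega>. (\<Sum>i=1..d. (e k j \<omega> * W k \<omega> i) * (Hmean M \<xi> Hs j i - Hs (\<xi> (Suc k) \<omega>) j i)))"
      by (rule Bochner_Integration.integrable_sum) (use t1 in blast)
    have s2: "(\<integral>\<omega>. (\<Sum>i=1..d. (e k j \<omega> * W k \<omega> i) * (Hmean M \<xi> Hs j i - Hs (\<xi> (Suc k) \<omega>) j i)) \<partial>M) = 0"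
      by (subst Bochner_Integration.integral_sum) (use t1 in auto)
    show ?thesis unfolding eq Bochner_Integration.integral_diff[OF s1 t2[THEN conjunct1]] s2 t2[THEN conjunct2] by simp
  qed

  have var: "(\<integral>\<omega>. (nz (Suc k) \<omega> j)^2 \<partial>M) \<le> \<sigma>^2 * lam j" if j: "j \<in> {1..d}" for k j
  proof -
    have nb: "(\<Sum>i=1..d. \<Sum>l=1..d. (if i = j then 1 else 0) * (if l = j then 1 else 0) *
           (\<integral>\<omega>. nz (Suc k) \<omega> i * nz (Suc k) \<omega> l \<partial>M))
        \<le> \<sigma>\<^sup>2 * (\<Sum>i=1..d. \<Sum>l=1..d. (if i = j then 1 else 0) * Hmean M \<xi> Hs i l * (if l = j then 1 else 0))"
      using noise_bound[rule_format, of "Suc k" "\<lambda>i. if i = j then 1 else 0"] unfolding nz_def by simp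
    have l: "(\<Sum>i=1..d. \<Sum>l=1..d. (if i = j then 1 else 0) * (if l = j then 1 else 0) *
           (\<integral>\<omega>. nz (Suc k) \<omega> i * nz (Suc k) \<omega> l \<partial>M)) = (\<integral>\<omega>. (nz (Suc k) \<omega> j)^2 \<partial>M)"
      unfolding dsum[OF finite_atLeastAtMost j] power2_eq_square ..
    have r: "(\<Sum>i=1..d. \<Sum>l=1..d. (if i = j then 1 else 0) * Hmean M \<xi> Hs i l * (if l = j then 1 else 0)) = lam j"
      unfolding dsum2[OF finite_atLeastAtMost j] using Hm[OF j j] by simp
    show ?thesis using nb l r by (simp add: mult.commute)
  qed

  define a where "a = (\<lambda>j k. \<integral>\<omega>. (e k j \<omega>)^2 \<partial>M)"
  have recs: "a j (Suc k) \<le> (1 - lam j / x (Suc k))^2 * a j k + (lam j * \<sigma>^2) / (x (Suc k))^2"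
    if j: "j \<in> {1..d}" for j k
  proof -
    let ?c = "1 - lam j / x (Suc k)" and ?h = "1 / x (Suc k)"
    have ie: "integrable M (\<lambda>\<omega>. (e k j \<omega>)^2)" using esq[OF j] .
    have ic: "integrable M (\<lambda>\<omega>. e k j \<omega> * nz (Suc k) \<omega> j)"
      by (rule integrable_mult_sq[OF ie nzsq[OF j] em nzm])
    have "a j (Suc k) = (\<integral>\<omega>. ?c^2 * (e k j \<omega>)^2 + (2*?c*?h) * (e k j \<omega> * nz (Suc k) \<omega> j) + ?h^2 * (nz (Suc k) \<omega> j)^2 \<partial>M)"
      unfolding a_def e_step[OF j] sq_expand ..
    also have "\<dots> = ?c^2 * a j k + (2*?c*?h) * (\<integral>\<omega>. e k j \<omega> * nz (Suc k) \<omega> j \<partial>M) + ?h^2 * (\<integral>\<omega>. (nz (Suc k) \<omega> j)^2 \<partial>M)"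
      unfolding a_def using ie ic nzsq[OF j] by (simp add: Bochner_Integration.integral_add)
    also have "\<dots> = ?c^2 * a j k + ?h^2 * (\<integral>\<omega>. (nz (Suc k) \<omega> j)^2 \<partial>M)"
      using cross[OF j] by simp
    also have "\<dots> \<le> ?c^2 * a j k + ?h^2 * (\<sigma>^2 * lam j)"
      using var[OF j] by (intro add_left_mono mult_left_mono) auto
    also have "\<dots> = ?c^2 * a j k + (lam j * \<sigma>^2) / (x (Suc k))^2"
      by (simp add: power_divide)
    finally show ?thesis .
  qed
  have a0: "a j 0 = (w1 j - wstar j)^2" for j
    by (simp add: a_def e_def W_def P.prob_space)
  have bound_j: "a j t \<le> (lam 1 / (lam 1 + lam d * real t))^2 * a j 0
      + (lam j * \<sigma>^2)/(2*lam j - lam d)/(lam 1 + lam d * real t) + (lam j * \<sigma>^2)/(lam 1 + lam d * real t)^2"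
    if j: "j \<in> {1..d}" for j
    by (rule rec_bound[where a = "a j"]) (use lamb[OF j] mupos a0 recs[OF j, unfolded x_def] in auto)

  define X where "X = lam 1 + lam d * real t"
  have Xpos: "X > 0" using xpos[of t] by (simp add: X_def x_def)
  have per_j: "lam j * a j t \<le> ((lam 1 + lam d) / X)^2 * (lam j * (w1 j - wstar j)^2)
      + ((lam j)^2 / (2 * lam j - lam d) * (\<sigma>^2 / X) + (lam j)^2 * \<sigma>^2 / X^2)"
    if j: "j \<in> {1..d}" for j
  proof -
    have lj: "lam j > 0" using lamb[OF j] by auto
    have "lam j * a j t \<le> lam j * ((lam 1 / X)^2 * a j 0 + (lam j * \<sigma>^2)/(2*lam j - lam d)/X + (lam j * \<sigma>^2)/X^2)"
      using bound_j[OF j] lj unfolding X_def by (intro mult_left_mono) auto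
    also have "\<dots> = (lam 1 / X)^2 * (lam j * (w1 j - wstar j)^2) + ((lam j)^2 / (2 * lam j - lam d) * (\<sigma>^2 / X) + (lam j)^2 * \<sigma>^2 / X^2)"
      unfolding a0 by (simp add: power2_eq_square field_simps)
    also have "\<dots> \<le> ((lam 1 + lam d) / X)^2 * (lam j * (w1 j - wstar j)^2) + ((lam j)^2 / (2 * lam j - lam d) * (\<sigma>^2 / X) + (lam j)^2 * \<sigma>^2 / X^2)"
    proof -
      have "lam 1 / X \<le> (lam 1 + lam d) / X" using mupos Xpos by (intro divide_right_mono) auto
      moreover have "0 \<le> lam 1 / X" using mupos L1 Xpos by auto
      ultimately have "(lam 1 / X)^2 \<le> ((lam 1 + lam d) / X)^2" by (intro power_mono) auto
      thus ?thesis using lj by (intro add_right_mono mult_right_mono) auto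
    qed
    finally show ?thesis .
  qed

  have fo: "2 * (fobj M \<xi> Hs bs d w - fobj M \<xi> Hs bs d wstar) = (\<Sum>j=1..d. lam j * (w j - wstar j)^2)" for w
  proof -
    have q: "(\<Sum>i=1..d. \<Sum>k=1..d. v i * Hmean M \<xi> Hs i k * v k) = (\<Sum>i=1..d. lam i * (v i * v i))" for v
    proof (intro sum.cong refl)
      fix i assume i: "i \<in> {1..d}"
      have "(\<Sum>k=1..d. v i * Hmean M \<xi> Hs i k * v k) = v i * (\<Sum>k=1..d. Hmean M \<xi> Hs i k * v k)"
        by (simp add: sum_distrib_left mult.assoc)
      also have "\<dots> = lam i * (v i * v i)" using Hsum[OF i] by simp
      finally show "(\<Sum>k=1..d. v i * Hmean M \<xi> Hs i k * v k) = lam i * (v i * v i)" .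
    qed
    have b': "(\<Sum>j=1..d. bmean M \<xi> bs j * v j) = (\<Sum>j=1..d. lam j * (wstar j * v j))" for v
      by (intro sum.cong refl) (auto simp: bm)
    have "(\<Sum>j=1..d. lam j * (w j - wstar j)^2)
        = (\<Sum>j=1..d. lam j * (w j * w j) - 2 * (lam j * (wstar j * w j)) + lam j * (wstar j * wstar j))"
      by (intro sum.cong refl) (simp add: power2_eq_square algebra_simps)
    also have "\<dots> = (\<Sum>j=1..d. lam j * (w j * w j)) - 2 * (\<Sum>j=1..d. lam j * (wstar j * w j))
        + (\<Sum>j=1..d. lam j * (wstar j * wstar j))"
      by (simp add: sum.distrib sum_subtractf sum_distrib_left)
    finally show ?thesis unfolding fobj_eq[where M=M and \<xi>=\<xi> and Hs=Hs and bs=bs and d=d, OF Hs_int bs_int] q b' by simp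
  qed

  have part1: "2 * (\<integral>\<omega>. fobj M \<xi> Hs bs d (W t \<omega>) - fobj M \<xi> Hs bs d wstar \<partial>M)
      = (\<integral>\<omega>. (\<Sum>j=1..d. lam j * (W t \<omega> j - wstar j)\<^sup>2) \<partial>M)"
    unfolding integral_mult_right_zero[symmetric] fo ..
  have part2: "(\<integral>\<omega>. (\<Sum>j=1..d. lam j * (W t \<omega> j - wstar j)\<^sup>2) \<partial>M) = (\<Sum>j=1..d. lam j * a j t)"
    unfolding a_def e_def
    by (subst Bochner_Integration.integral_sum) (use esq in \<open>auto simp: e_def\<close>)
  have part3: "(\<Sum>j=1..d. lam j * a j t) \<le> ((lam 1 + lam d) / X)^2 * (\<Sum>j=1..d. lam j * (w1 j - wstar j)^2)
      + (\<Sum>j=1..d. (lam j)^2 / (2 * lam j - lam d) * (\<sigma>^2 / X) + (lam j)^2 * \<sigma>^2 / X^2)"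
  proof -
    have "(\<Sum>j=1..d. lam j * a j t) \<le> (\<Sum>j=1..d. ((lam 1 + lam d) / X)^2 * (lam j * (w1 j - wstar j)^2)
      + ((lam j)^2 / (2 * lam j - lam d) * (\<sigma>^2 / X) + (lam j)^2 * \<sigma>^2 / X^2))"
      by (rule sum_mono) (rule per_j, assumption)
    also have "\<dots> = ((lam 1 + lam d) / X)^2 * (\<Sum>j=1..d. lam j * (w1 j - wstar j)^2)
      + (\<Sum>j=1..d. (lam j)^2 / (2 * lam j - lam d) * (\<sigma>^2 / X) + (lam j)^2 * \<sigma>^2 / X^2)"
      by (simp add: sum.distrib sum_distrib_left)
    finally show ?thesis .
  qed
  show ?thesis using part1 part2 part3 unfolding W_def X_def by simp
qed

end
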